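(* Let $\beta_1,\dots,\beta_N>0$ satisfy $(d-1)\sum_i\beta_i^2+(\sum_i\beta_i)^2=1$ and suppose the channel $T_\beta$ has marginals $(T_\beta)_i(\rho)=p_i\rho+(1-p_i)\frac Id$ for all pure states $\rho$. Then $N+(d^2-1)\sum_{i=1}^Np_i=d(d-1)+\frac{\big(\sum_{i=1}^N\sqrt{(d^2-1)p_i+1}\big)^2}{N+d-1}$.
   Context: Fix $d\ge2$, $N\ge1$. For a permutation $\sigma$ of $\{0,\dots,N-1\}$, $\Pi_\sigma(v_0\otimes\cdots\otimes v_{N-1})=v_{\sigma^{-1}(0)}\otimes\cdots\otimes v_{\sigma^{-1}(N-1)}$ on $(\mathbb C^d)^{\otimes N}$; $P_\beta=\frac1{N!}\sum_\sigma\beta_{\sigma(0)+1}\Pi_\sigma$ and $T_\beta(\rho)=\frac{dN(N+d-1)}{\binom{N+d-1}{N}}P_\beta(\rho\otimes I^{\otimes(N-1)})P_\beta^{\mathsf T}$, a quantum channel $\mathcal M_d\to\mathcal M_d^{\otimes N}$, with marginals $(T_\beta)_i(\rho)=\mathrm{Tr}_{\{1,\dots,N\}\setminus\{i\}}T_\beta(\rho)$ (output factors labelled $1,\dots,N$). *)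

theory Defs
  imports "HOL-Analysis.Analysis" "HOL-Combinatorics.Permutations"
begin

text \<open>Operators on (C^d)^{tensor N} are represented as complex matrices indexed by
multi-indices j : {0..N-1} -> {0..d-1} (extensional functions); entry (j,i) is
the coefficient of e_j in the image of e_i. Operators on C^d are matrices
nat => nat => complex indexed by {0..d-1}.\<close>

type_synonym top = "(nat \<Rightarrow> nat) \<Rightarrow> (nat \<Rightarrow> nat) \<Rightarrow> complex"

definition midx :: "nat \<Rightarrow> nat \<Rightarrow> (nat \<Rightarrow> nat) set" where
  "midx d N = PiE {..<N} (\<lambda>_. {..<d})"

definition op_mult :: "nat \<Rightarrow> nat \<Rightarrow> top \<Rightarrow> top \<Rightarrow> top" where
  "op_mult d N A B = (\<lambda>j i. \<Sum>k\<in>midx d N. A j k * B k i)"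

definition op_transpose :: "top \<Rightarrow> top" where
  "op_transpose A = (\<lambda>j i. A i j)"

text \<open>Pi_sigma (v_0 x ... x v_{N-1}) = v_{sigma^-1 0} x ... x v_{sigma^-1 (N-1)}:
it maps e_i to e_{i o sigma^-1}, so its (j,i) entry is 1 iff i = j o sigma.\<close>
definition perm_op :: "(nat \<Rightarrow> nat) \<Rightarrow> top" where
  "perm_op \<sigma> = (\<lambda>j i. if i = j \<circ> \<sigma> then 1 else 0)"

definition P_beta :: "nat \<Rightarrow> (nat \<Rightarrow> real) \<Rightarrow> top" where
  "P_beta N \<beta> = (\<lambda>j i. (1 / of_nat (fact N)) *
     (\<Sum>\<sigma>\<in>{\<sigma>. \<sigma> permutes {..<N}}. of_real (\<beta> (\<sigma> 0 + 1)) * perm_op \<sigma> j i))"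

text \<open>rho tensor I^{tensor (N-1)}, rho acting on the first tensor factor (position 0).\<close>
definition ext_first :: "nat \<Rightarrow> (nat \<Rightarrow> nat \<Rightarrow> complex) \<Rightarrow> top" where
  "ext_first N \<rho> = (\<lambda>j i. \<rho> (j 0) (i 0) * (if \<forall>k\<in>{1..<N}. j k = i k then 1 else 0))"

definition T_beta :: "nat \<Rightarrow> nat \<Rightarrow> (nat \<Rightarrow> real) \<Rightarrow> (nat \<Rightarrow> nat \<Rightarrow> complex) \<Rightarrow> top" where
  "T_beta d N \<beta> \<rho> = (\<lambda>j i.
     of_real (real d * real N * real (N + d - 1) / real ((N + d - 1) choose N)) *
     op_mult d N (op_mult d N (P_beta N \<beta>) (ext_first N \<rho>)) (op_transpose (P_beta N \<beta>)) j i)"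

text \<open>Marginal on output factor i (labels 1..N; factor i is tensor position i-1):
partial trace over all other factors.\<close>
definition marginal :: "nat \<Rightarrow> nat \<Rightarrow> nat \<Rightarrow> top \<Rightarrow> nat \<Rightarrow> nat \<Rightarrow> complex" where
  "marginal d N i X = (\<lambda>a b. \<Sum>x\<in>midx d N. if x (i - 1) = a then X x (x(i - 1 := b)) else 0)"

definition pure_state :: "(nat \<Rightarrow> complex) \<Rightarrow> nat \<Rightarrow> nat \<Rightarrow> complex" where
  "pure_state v = (\<lambda>a b. v a * cnj (v b))"

end

theory Submission
  imports Defs
begin


lemma stab_card:
  fixes x :: "'a \<Rightarrow> 'b"
  assumes S: "finite S" and C: "finite C" and xS: "x ` S \<subseteq> C"
  shows "card {\<rho>. \<rho> permutes S \<and> (\<forall>l\<in>S. x (\<rho> l) = x l)}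
         = (\<Prod>a\<in>C. fact (card {l\<in>S. x l = a}))"
proof -
  define L where "L a = {l\<in>S. x l = a}" for a
  define Stab where "Stab = {\<rho>. \<rho> permutes S \<and> (\<forall>l\<in>S. x (\<rho> l) = x l)}"
  define PP where "PP = PiE C (\<lambda>a. {\<pi>. \<pi> permutes L a})"
  define \<phi> where "\<phi> \<rho> = (\<lambda>a\<in>C. \<lambda>l. if l \<in> L a then \<rho> l else l)" for \<rho> :: "'a \<Rightarrow> 'a"
  define \<psi> where "\<psi> f = (\<lambda>l. if l \<in> S then f (x l) l else l)" for f :: "'b \<Rightarrow> 'a \<Rightarrow> 'a"
  have finL: "finite (L a)" for a using S by (simp add: L_def)
  have i: "(\<lambda>l. if l \<in> L a then \<rho> l else l) permutes L a" if r: "\<rho> \<in> Stab" for \<rho> a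
  proof (rule bij_imp_permutes)
    have p: "\<rho> permutes S" and px: "\<forall>l\<in>S. x (\<rho> l) = x l" using r by (auto simp: Stab_def)
    have sub: "\<rho> ` L a \<subseteq> L a" using px permutes_in_image[OF p] by (auto simp: L_def)
    have inj: "inj_on \<rho> (L a)" using permutes_inj_on[OF p] .
    have "\<rho> ` L a = L a" using endo_inj_surj[OF finL sub inj] .
    then show "bij_betw (\<lambda>l. if l \<in> L a then \<rho> l else l) (L a) (L a)"
      using inj unfolding bij_betw_def by (auto simp: inj_on_def image_def)
  qed auto
  have ii: "\<psi> (\<phi> \<rho>) = \<rho>" if r: "\<rho> \<in> Stab" for \<rho>
  proof
    fix l
    have p: "\<rho> permutes S" using r by (auto simp: Stab_def)
    show "\<psi> (\<phi> \<rho>) l = \<rho> l"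
      using xS permutes_not_in[OF p, of l] by (auto simp: \<psi>_def \<phi>_def L_def)
  qed
  have iii: "\<psi> f \<in> Stab" if f: "f \<in> PP" for f
  proof -
    have fp: "f a permutes L a" if "a \<in> C" for a using f that by (auto simp: PP_def)
    have mem: "f (x l) l \<in> L (x l)" if "l \<in> S" for l
      using permutes_in_image[OF fp[of "x l"]] that xS by (auto simp: L_def)
    have xpres: "\<forall>l\<in>S. x (\<psi> f l) = x l"
      using mem by (auto simp: \<psi>_def L_def)
    have img: "\<psi> f ` S \<subseteq> S" using mem by (auto simp: \<psi>_def L_def)
    have inj: "inj_on (\<psi> f) S"
    proof (rule inj_onI)
      fix l l' assume l: "l \<in> S" and l': "l' \<in> S" and eq: "\<psi> f l = \<psi> f l'"
      have "x l = x l'" using xpres l l' eq by metis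
      then have "f (x l) l = f (x l) l'" using eq l l' by (simp add: \<psi>_def)
      then show "l = l'" using permutes_inj[OF fp[of "x l"]] l xS by (auto simp: inj_def)
    qed
    have "\<psi> f ` S = S" using endo_inj_surj[OF S img inj] .
    then have "bij_betw (\<psi> f) S S" using inj by (simp add: bij_betw_def)
    then have "\<psi> f permutes S" by (rule bij_imp_permutes) (simp add: \<psi>_def)
    then show ?thesis using xpres by (simp add: Stab_def)
  qed
  have iv: "\<phi> (\<psi> f) = f" if f: "f \<in> PP" for f
  proof
    fix a
    have fp: "f a permutes L a" if "a \<in> C" for a using f that by (auto simp: PP_def)
    show "\<phi> (\<psi> f) a = f a"
    proof (cases "a \<in> C")
      case True
      show ?thesis
      proof
        fix l show "\<phi> (\<psi> f) a l = f a l"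
          using True permutes_not_in[OF fp[OF True], of l] by (auto simp: \<phi>_def \<psi>_def L_def)
      qed
    next
      case False then show ?thesis using f by (auto simp: \<phi>_def PP_def PiE_def extensional_def)
    qed
  qed
  have v: "\<phi> \<rho> \<in> PP" if "\<rho> \<in> Stab" for \<rho>
    using i[OF that] by (auto simp: \<phi>_def PP_def)
  have "bij_betw \<phi> Stab PP"
    by (rule bij_betw_byWitness[where f'=\<psi>]) (use ii iv v iii in auto)
  then have "card Stab = card PP" by (rule bij_betw_same_card)
  also have "\<dots> = (\<Prod>a\<in>C. card {\<pi>. \<pi> permutes L a})" by (simp add: PP_def card_PiE C)
  also have "\<dots> = (\<Prod>a\<in>C. fact (card (L a)))"
    by (rule prod.cong[OF refl]) (rule card_permutations[OF refl finL])
  finally show ?thesis by (simp add: Stab_def L_def)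
qed




lemma permutes_minus_fix:
  assumes "p permutes S" "p a = a" shows "p permutes (S - {a})"
  using assms unfolding permutes_def by (metis Diff_iff singletonD)

lemma fiber_card:
  fixes x :: "nat \<Rightarrow> 'b"
  assumes \<sigma>: "\<sigma> permutes {..<N}" and l: "l < N" and N: "0 < N" and xl: "x l = x (\<sigma> 0)"
  shows "card {\<tau>. \<tau> permutes {..<N} \<and> x \<circ> \<tau> = x \<circ> \<sigma> \<and> \<tau> 0 = l}
       = card {\<rho>. \<rho> permutes ({..<N} - {\<sigma> 0}) \<and> (\<forall>j\<in>{..<N} - {\<sigma> 0}. x (\<rho> j) = x j)}"
proof -
  define k where "k = \<sigma> 0"
  define t where "t = Transposition.transpose k l"
  have k: "k < N" using permutes_in_image[OF \<sigma>, of 0] N by (simp add: k_def)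
  have xt: "x (t m) = x m" for m using xl by (auto simp: t_def k_def Transposition.transpose_def)
  have tp: "t permutes {..<N}" using k l by (simp add: t_def permutes_swap_id)
  have tt: "t (t m) = m" for m by (simp add: t_def)
  define A where "A = {\<rho>. \<rho> permutes ({..<N} - {k}) \<and> (\<forall>j\<in>{..<N} - {k}. x (\<rho> j) = x j)}"
  define B where "B = {\<tau>. \<tau> permutes {..<N} \<and> x \<circ> \<tau> = x \<circ> \<sigma> \<and> \<tau> 0 = l}"
  have "bij_betw (\<lambda>\<rho>. t \<circ> \<rho> \<circ> \<sigma>) A B"
  proof (rule bij_betw_byWitness[where f'="\<lambda>\<tau>. t \<circ> \<tau> \<circ> inv \<sigma>"])
    show "\<forall>a\<in>A. t \<circ> (t \<circ> a \<circ> \<sigma>) \<circ> inv \<sigma> = a"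
      by (auto simp: fun_eq_iff tt permutes_inverses[OF \<sigma>])
    show "\<forall>a\<in>B. t \<circ> (t \<circ> a \<circ> inv \<sigma>) \<circ> \<sigma> = a"
      by (auto simp: fun_eq_iff tt permutes_inverses[OF \<sigma>])
    show "(\<lambda>\<rho>. t \<circ> \<rho> \<circ> \<sigma>) ` A \<subseteq> B"
    proof
      fix \<tau> assume "\<tau> \<in> (\<lambda>\<rho>. t \<circ> \<rho> \<circ> \<sigma>) ` A"
      then obtain \<rho> where r: "\<rho> \<in> A" and \<tau>: "\<tau> = t \<circ> \<rho> \<circ> \<sigma>" by auto
      have rp: "\<rho> permutes ({..<N} - {k})" and rx: "\<forall>j\<in>{..<N} - {k}. x (\<rho> j) = x j"
        using r by (auto simp: A_def)
      have rp': "\<rho> permutes {..<N}" using permutes_subset[OF rp] by auto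
      have rk: "\<rho> k = k" using permutes_not_in[OF rp] by auto
      have rx': "x (\<rho> m) = x m" for m
        using rx permutes_not_in[OF rp, of m] by (cases "m \<in> {..<N} - {k}") auto
      have "\<tau> permutes {..<N}" unfolding \<tau> by (intro permutes_compose \<sigma> rp' tp)
      moreover have "x \<circ> \<tau> = x \<circ> \<sigma>" by (auto simp: \<tau> fun_eq_iff xt rx')
      moreover have "\<tau> 0 = l" by (simp add: \<tau> rk k_def[symmetric] t_def)
      ultimately show "\<tau> \<in> B" by (simp add: B_def)
    qed
    show "(\<lambda>\<tau>. t \<circ> \<tau> \<circ> inv \<sigma>) ` B \<subseteq> A"
    proof
      fix \<rho> assume "\<rho> \<in> (\<lambda>\<tau>. t \<circ> \<tau> \<circ> inv \<sigma>) ` B"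
      then obtain \<tau> where r: "\<tau> \<in> B" and \<rho>: "\<rho> = t \<circ> \<tau> \<circ> inv \<sigma>" by auto
      have tp': "\<tau> permutes {..<N}" and tx: "x \<circ> \<tau> = x \<circ> \<sigma>" and t0: "\<tau> 0 = l"
        using r by (auto simp: B_def)
      have "\<rho> permutes {..<N}" unfolding \<rho> by (intro permutes_compose permutes_inv \<sigma> tp' tp)
      moreover have "\<rho> k = k"
        by (simp add: \<rho> k_def permutes_inverses[OF \<sigma>] t0 t_def)
      ultimately have "\<rho> permutes ({..<N} - {k})" by (rule permutes_minus_fix)
      moreover have "x (\<rho> j) = x j" for j
      proof -
        have "x (\<rho> j) = x (\<tau> (inv \<sigma> j))" by (simp add: \<rho> xt)
        also have "\<dots> = x (\<sigma> (inv \<sigma> j))" using tx by (metis comp_apply)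
        finally show ?thesis by (simp add: permutes_inverses[OF \<sigma>])
      qed
      ultimately show "\<rho> \<in> A" by (simp add: A_def)
    qed
  qed
  then have "card A = card B" by (rule bij_betw_same_card)
  then show ?thesis by (simp add: A_def B_def k_def)
qed



definition cnt :: "nat set \<Rightarrow> (nat \<Rightarrow> nat) \<Rightarrow> nat \<Rightarrow> nat" where
  "cnt S x a = card {l\<in>S. x l = a}"

definition wgt :: "nat \<Rightarrow> nat set \<Rightarrow> (nat \<Rightarrow> nat) \<Rightarrow> nat" where
  "wgt d S x = fact (cnt S x 0 - 1) * (\<Prod>b\<in>{1..<d}. fact (cnt S x b))"

lemma cnt_upd:
  assumes "finite S" "s \<notin> S"
  shows "cnt (insert s S) (x(s:=a)) b = cnt S x b + (if a = b then 1 else 0)"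
proof -
  have "{l\<in>insert s S. (x(s:=a)) l = b} = (if a = b then insert s {l\<in>S. x l = b} else {l\<in>S. x l = b})"
    using assms by auto
  then show ?thesis using assms by (simp add: cnt_def)
qed

lemma wgt_upd:
  assumes S: "finite S" "s \<notin> S" and a: "a < d" and c0: "cnt S x 0 \<ge> 1"
  shows "wgt d (insert s S) (x(s:=a)) = wgt d S x * (if a = 0 then cnt S x 0 else cnt S x a + 1)"
proof (cases "a = 0")
  case True
  have P: "(\<Prod>b\<in>{1..<d}. fact (cnt (insert s S) (x(s:=0)) b)) = (\<Prod>b\<in>{1..<d}. fact (cnt S x b) :: nat)"
    by (rule prod.cong) (use cnt_upd[OF S] in auto)
  have c: "cnt (insert s S) (x(s:=0)) 0 - 1 = cnt S x 0" using cnt_upd[OF S, of x 0 0] by simp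
  have F: "fact (cnt (insert s S) (x(s:=0)) 0 - 1) = (fact (cnt S x 0 - 1) * cnt S x 0 :: nat)"
    unfolding c using c0 fact_reduce[of "cnt S x 0", where 'a=nat] by (simp add: mult.commute)
  show ?thesis unfolding wgt_def True using P F by simp
next
  case False
  have "(\<Prod>b\<in>{1..<d}. fact (cnt (insert s S) (x(s:=a)) b))
      = (\<Prod>b\<in>{1..<d}. fact (cnt S x b) * (if b = a then cnt S x a + 1 else 1) :: nat)"
    by (rule prod.cong) (use False cnt_upd[OF S] in auto)
  also have "\<dots> = (\<Prod>b\<in>{1..<d}. fact (cnt S x b)) * (cnt S x a + 1)"
    using False a by (simp add: prod.distrib prod.delta)
  finally show ?thesis using False cnt_upd[OF S, of x a 0] by (simp add: wgt_def algebra_simps)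
qed

lemma sum_cnt:
  assumes "finite S" "x \<in> PiE S (\<lambda>_. {..<d})"
  shows "(\<Sum>a<d. cnt S x a) = card S"
proof -
  have "S = (\<Union>a\<in>{..<d}. {l\<in>S. x l = a})" using assms by auto
  then have "card S = card (\<Union>a\<in>{..<d}. {l\<in>S. x l = a})" by simp
  also have "\<dots> = (\<Sum>a<d. card {l\<in>S. x l = a})"
    by (rule card_UN_disjoint) (use assms in auto)
  finally show ?thesis by (simp add: cnt_def)
qed

lemma sum_mult_upd:
  assumes "finite S" "x \<in> PiE S (\<lambda>_. {..<d})" "d \<ge> 1"
  shows "(\<Sum>a<d. (if a = 0 then cnt S x 0 else cnt S x a + 1)) = card S + d - 1"
proof -
  have "(\<Sum>a<d. (if a = 0 then cnt S x 0 else cnt S x a + 1)) = (\<Sum>a<d. cnt S x a + (if a = 0 then 0 else 1))"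
    by (rule sum.cong) auto
  also have "\<dots> = card S + (\<Sum>a<d. (if a = 0 then 0 else 1))"
    using sum_cnt[OF assms(1,2)] by (simp add: sum.distrib)
  also have "(\<Sum>a<d. (if a = 0 then 0 else 1::nat)) = d - 1"
  proof -
    obtain d' where "d = Suc d'" using assms(3) by (cases d) auto
    then show ?thesis by (simp only: sum.lessThan_Suc_shift) simp
  qed
  finally show ?thesis using assms(3) by simp
qed

lemma PiE_filter_insert:
  assumes "s \<notin> S" "s \<notin> T"
  shows "{x\<in>PiE (insert s S) (\<lambda>_. D). \<forall>l\<in>T. x l = 0}
       = (\<lambda>(x,a). x(s:=a)) ` ({x\<in>PiE S (\<lambda>_. D). \<forall>l\<in>T. x l = 0} \<times> D)"
proof (rule set_eqI)
  fix y
  show "y \<in> {x\<in>PiE (insert s S) (\<lambda>_. D). \<forall>l\<in>T. x l = 0} \<longleftrightarrow>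
        y \<in> (\<lambda>(x,a). x(s:=a)) ` ({x\<in>PiE S (\<lambda>_. D). \<forall>l\<in>T. x l = 0} \<times> D)"
  proof
    assume y: "y \<in> {x\<in>PiE (insert s S) (\<lambda>_. D). \<forall>l\<in>T. x l = 0}"
    have yP: "y \<in> PiE (insert s S) (\<lambda>_. D)" and y0: "\<forall>l\<in>T. y l = 0" using y by auto
    have "y(s:=undefined) \<in> PiE S (\<lambda>_. D)"
      unfolding PiE_iff extensional_def
    proof (intro conjI ballI allI impI CollectI)
      fix l assume "l \<in> S" then show "(y(s:=undefined)) l \<in> D"
        using yP assms(1) by (auto simp: PiE_iff)
    next
      fix l assume "l \<notin> S" then show "(y(s:=undefined)) l = undefined"
        using yP by (cases "l = s") (auto simp: PiE_iff extensional_def)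
    qed
    moreover have "\<forall>l\<in>T. (y(s:=undefined)) l = 0" using y0 assms(2) by auto
    moreover have "y s \<in> D" using yP by (auto simp: PiE_iff)
    ultimately have "(y(s:=undefined), y s) \<in> {x\<in>PiE S (\<lambda>_. D). \<forall>l\<in>T. x l = 0} \<times> D" by simp
    moreover have "y = (\<lambda>(x,a). x(s:=a)) (y(s:=undefined), y s)" by simp
    ultimately show "y \<in> (\<lambda>(x,a). x(s:=a)) ` ({x\<in>PiE S (\<lambda>_. D). \<forall>l\<in>T. x l = 0} \<times> D)"
      by (rule rev_image_eqI)
  next
    assume "y \<in> (\<lambda>(x,a). x(s:=a)) ` ({x\<in>PiE S (\<lambda>_. D). \<forall>l\<in>T. x l = 0} \<times> D)"
    then obtain x a where x: "x \<in> PiE S (\<lambda>_. D)" and x0: "\<forall>l\<in>T. x l = 0" and a: "a \<in> D"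
      and y: "y = x(s:=a)" by auto
    have "y \<in> PiE (insert s S) (\<lambda>_. D)"
      unfolding y using x a by (auto simp: PiE_iff extensional_def)
    moreover have "\<forall>l\<in>T. y l = 0" using x0 assms(2) y by auto
    ultimately show "y \<in> {x\<in>PiE (insert s S) (\<lambda>_. D). \<forall>l\<in>T. x l = 0}" by simp
  qed
qed

lemma inj_upd:
  assumes "s \<notin> S"
  shows "inj_on (\<lambda>(x,a). x(s:=a)) (PiE S (\<lambda>_. D) \<times> D')"
proof (rule inj_onI, clarify)
  fix x a x' a'
  assume x: "x \<in> PiE S (\<lambda>_. D)" and x': "x' \<in> PiE S (\<lambda>_. D)" and eq: "x(s:=a) = x'(s:=a')"
  have "a = a'" using eq by (metis fun_upd_same)
  moreover have "x = x'"
  proof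
    fix l show "x l = x' l"
    proof (cases "l = s")
      case True then show ?thesis using x x' assms by (auto simp: PiE_def extensional_def)
    next
      case False then show ?thesis using eq by (metis fun_upd_other)
    qed
  qed
  ultimately show "x = x' \<and> a = a'" by simp
qed

lemma psi_sum:
  assumes T: "finite T" "T \<noteq> {}" and U: "finite U" "U \<inter> T = {}" and d: "d \<ge> 1"
  shows "(\<Sum>x\<in>{x\<in>PiE (T \<union> U) (\<lambda>_. {..<d}). \<forall>l\<in>T. x l = 0}. wgt d (T \<union> U) x)
       = fact (card T - 1) * pochhammer (d + card T - 1) (card U)"
  using U
proof (induction U rule: finite_induct)
  case empty
  define z where "z = (\<lambda>l\<in>T. (0::nat))"
  have "{x\<in>PiE T (\<lambda>_. {..<d}). \<forall>l\<in>T. x l = 0} = {z}"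
    using d by (auto simp: PiE_def extensional_def z_def)
  moreover have "cnt T z 0 = card T" by (simp add: cnt_def z_def)
  moreover have "(\<Prod>b\<in>{1..<d}. fact (cnt T z b)) = (1::nat)"
    by (rule prod.neutral) (simp add: cnt_def z_def)
  ultimately show ?case by (simp add: wgt_def)
next
  case (insert s U)
  define S where "S = T \<union> U"
  have S: "finite S" "s \<notin> S" using insert T by (auto simp: S_def)
  have sT: "s \<notin> T" using insert by auto
  have eqS: "T \<union> insert s U = insert s S" by (auto simp: S_def)
  define X where "X = {x\<in>PiE S (\<lambda>_. {..<d}). \<forall>l\<in>T. x l = 0}"
  have c0: "cnt S x 0 \<ge> 1" if "x \<in> X" for x
  proof -
    obtain t where "t \<in> T" using T by auto
    then have "t \<in> {l\<in>S. x l = 0}" using that by (auto simp: X_def S_def)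
    then have "{l\<in>S. x l = 0} \<noteq> {}" by blast
    moreover have "finite {l\<in>S. x l = 0}" using S(1) by simp
    ultimately show ?thesis unfolding cnt_def by (simp add: Suc_leI card_gt_0_iff)
  qed
  have "(\<Sum>x\<in>{x\<in>PiE (insert s S) (\<lambda>_. {..<d}). \<forall>l\<in>T. x l = 0}. wgt d (insert s S) x)
      = (\<Sum>p\<in>X \<times> {..<d}. wgt d (insert s S) ((\<lambda>(x,a). x(s:=a)) p))"
  proof -
    have inj: "inj_on (\<lambda>(x,a). x(s:=a)) (X \<times> {..<d})"
      by (rule inj_on_subset[OF inj_upd[OF S(2)]]) (auto simp: X_def)
    show ?thesis
      unfolding PiE_filter_insert[OF S(2) sT] X_def[symmetric]
      by (auto simp: sum.reindex[OF inj] comp_def intro!: sum.cong)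
  qed
  also have "\<dots> = (\<Sum>x\<in>X. \<Sum>a<d. wgt d (insert s S) (x(s:=a)))"
    by (subst sum.cartesian_product) (simp add: split_def)
  also have "\<dots> = (\<Sum>x\<in>X. wgt d S x * (card S + d - 1))"
  proof (rule sum.cong[OF refl])
    fix x assume x: "x \<in> X"
    have "(\<Sum>a<d. wgt d (insert s S) (x(s:=a)))
        = (\<Sum>a<d. wgt d S x * (if a = 0 then cnt S x 0 else cnt S x a + 1))"
      by (rule sum.cong[OF refl]) (use wgt_upd[OF S _ c0[OF x]] in auto)
    also have "\<dots> = wgt d S x * (card S + d - 1)"
      using sum_mult_upd[OF S(1) _ d, of x] x by (simp add: sum_distrib_left[symmetric] X_def)
    finally show "(\<Sum>a<d. wgt d (insert s S) (x(s:=a))) = wgt d S x * (card S + d - 1)" .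
  qed
  also have "\<dots> = (\<Sum>x\<in>X. wgt d S x) * (card S + d - 1)" by (simp add: sum_distrib_right)
  also have "\<dots> = fact (card T - 1) * pochhammer (d + card T - 1) (card U) * (card S + d - 1)"
    using insert.IH insert.prems by (simp add: X_def S_def)
  also have "\<dots> = fact (card T - 1) * pochhammer (d + card T - 1) (card (insert s U))"
  proof -
    have cS: "card S = card T + card U" using insert T by (simp add: S_def card_Un_disjoint Int_commute)
    have "card T \<ge> 1" using T by (simp add: Suc_leI card_gt_0_iff)
    then have "d + card T - 1 + card U = card S + d - 1" using cS d by simp
    then show ?thesis using insert by (simp add: pochhammer_Suc)
  qed
  finally show ?case by (simp only: eqS X_def)
qed



definition Pv :: "nat \<Rightarrow> (nat \<Rightarrow> real) \<Rightarrow> (nat \<Rightarrow> nat) \<Rightarrow> (nat \<Rightarrow> nat) \<Rightarrow> real" where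
  "Pv N \<beta> x k = (\<Sum>\<sigma>\<in>{\<sigma>. \<sigma> permutes {..<N}}. \<beta> (\<sigma> 0 + 1) * (if k = x \<circ> \<sigma> then 1 else 0))"

definition B0 :: "nat \<Rightarrow> (nat \<Rightarrow> real) \<Rightarrow> (nat \<Rightarrow> nat) \<Rightarrow> real" where
  "B0 N \<beta> x = (\<Sum>l\<in>{l\<in>{..<N}. x l = 0}. \<beta> (l + 1))"

lemma sum_by_value:
  fixes f :: "'b \<Rightarrow> real"
  assumes "finite A" "finite L" "g ` A \<subseteq> L"
  shows "(\<Sum>a\<in>A. f (g a)) = (\<Sum>l\<in>L. f l * card {a\<in>A. g a = l})"
proof -
  have "(\<Sum>a\<in>A. f (g a)) = (\<Sum>l\<in>L. \<Sum>a\<in>{a\<in>A. g a = l}. f (g a))"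
    using sum.group[OF assms, of "\<lambda>a. f (g a)"] by simp
  also have "\<dots> = (\<Sum>l\<in>L. f l * card {a\<in>A. g a = l})"
  proof (rule sum.cong[OF refl])
    fix l
    have "(\<Sum>a\<in>{a\<in>A. g a = l}. f (g a)) = (\<Sum>a\<in>{a\<in>A. g a = l}. f l)" by (rule sum.cong) auto
    then show "(\<Sum>a\<in>{a\<in>A. g a = l}. f (g a)) = f l * card {a\<in>A. g a = l}" by simp
  qed
  finally show ?thesis .
qed

lemma perms_fiber:
  assumes "l < N"
  shows "card {\<sigma>. \<sigma> permutes {..<N} \<and> \<sigma> 0 = l} = fact (N - 1)"
proof -
  have N: "0 < N" using assms by simp
  have "card {\<tau>. \<tau> permutes {..<N} \<and> (\<lambda>_. 0::nat) \<circ> \<tau> = (\<lambda>_. 0) \<circ> id \<and> \<tau> 0 = l}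
      = card {\<rho>. \<rho> permutes ({..<N} - {id 0}) \<and> (\<forall>j\<in>{..<N} - {id 0}. (\<lambda>_. 0::nat) (\<rho> j) = (\<lambda>_. 0) j)}"
    by (rule fiber_card) (use assms in auto)
  moreover have "card {\<rho>. \<rho> permutes ({..<N} - {0::nat})} = fact (N - 1)"
    by (rule card_permutations) (use N in auto)
  ultimately show ?thesis by (simp add: comp_def)
qed

lemma Kk:
  assumes x: "x ` {..<N} \<subseteq> {..<d}" and k: "k < N" and xk: "x k = 0"
  shows "card {\<rho>. \<rho> permutes ({..<N} - {k}) \<and> (\<forall>j\<in>{..<N} - {k}. x (\<rho> j) = x j)} = wgt d {..<N} x"
proof -
  have d: "0 < d" using x k xk by force
  have "card {\<rho>. \<rho> permutes ({..<N} - {k}) \<and> (\<forall>j\<in>{..<N} - {k}. x (\<rho> j) = x j)}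
      = (\<Prod>a\<in>{..<d}. fact (card {l\<in>{..<N} - {k}. x l = a}))"
    by (rule stab_card) (use x in auto)
  also have "{..<d} = insert 0 {1..<d}" using d by auto
  also have "(\<Prod>a\<in>insert 0 {1..<d}. fact (card {l\<in>{..<N} - {k}. x l = a}))
      = fact (card {l\<in>{..<N} - {k}. x l = 0}) * (\<Prod>a\<in>{1..<d}. fact (card {l\<in>{..<N} - {k}. x l = a}))"
    by simp
  also have "card {l\<in>{..<N} - {k}. x l = 0} = cnt {..<N} x 0 - 1"
  proof -
    have "{l\<in>{..<N} - {k}. x l = 0} = {l\<in>{..<N}. x l = 0} - {k}" by auto
    then show ?thesis using k xk by (simp add: cnt_def)
  qed
  also have "(\<Prod>a\<in>{1..<d}. fact (card {l\<in>{..<N} - {k}. x l = a})) = (\<Prod>a\<in>{1..<d}. fact (cnt {..<N} x a))"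
  proof (rule prod.cong[OF refl])
    fix a assume "a \<in> {1..<d}"
    then have "{l\<in>{..<N} - {k}. x l = a} = {l\<in>{..<N}. x l = a}" using xk by auto
    then show "fact (card {l\<in>{..<N} - {k}. x l = a}) = fact (cnt {..<N} x a)" by (simp add: cnt_def)
  qed
  finally show ?thesis by (simp add: wgt_def)
qed

lemma B0_alt: "B0 N \<beta> x = (\<Sum>l<N. if x l = 0 then \<beta> (l + 1) else 0)"
  unfolding B0_def by (rule sum.inter_filter) simp

lemma comp_perm_midx:
  assumes "x \<in> midx d N" "\<sigma> permutes {..<N}"
  shows "x \<circ> \<sigma> \<in> midx d N"
  using assms permutes_in_image[OF assms(2)] permutes_not_in[OF assms(2)]
  by (auto simp: midx_def PiE_iff extensional_def)

lemma stepB: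
  assumes x: "x \<in> midx d N" and N: "0 < N"
  shows "(\<Sum>k\<in>{k\<in>midx d N. k 0 = 0}. (Pv N \<beta> x k)^2) = fact (N - 1) * wgt d {..<N} x * (B0 N \<beta> x)^2"
proof -
  define Perm where "Perm = {\<sigma>. \<sigma> permutes {..<(N::nat)}}"
  define M0 where "M0 = {k\<in>midx d N. k 0 = 0}"
  have fP: "finite Perm" unfolding Perm_def by (rule finite_permutations) simp
  have fM: "finite M0" unfolding M0_def midx_def
    by (rule finite_subset[of _ "{..<N} \<rightarrow>\<^sub>E {..<d}"]) (auto intro: finite_PiE)
  have xr: "x ` {..<N} \<subseteq> {..<d}" using x by (auto simp: midx_def PiE_iff)
  have P0: "\<sigma> 0 < N" if "\<sigma> \<in> Perm" for \<sigma>
    using that N permutes_in_image[of \<sigma> "{..<N}" 0] by (auto simp: Perm_def)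
  have Pvs: "Pv N \<beta> x (x \<circ> \<sigma>) = real (wgt d {..<N} x) * B0 N \<beta> x" if s: "\<sigma> \<in> Perm" "x (\<sigma> 0) = 0" for \<sigma>
  proof -
    define A where "A = {\<tau>\<in>Perm. x \<circ> \<sigma> = x \<circ> \<tau>}"
    have fA: "finite A" using fP by (simp add: A_def)
    have "Pv N \<beta> x (x \<circ> \<sigma>) = (\<Sum>\<tau>\<in>A. \<beta> (\<tau> 0 + 1))"
      unfolding Pv_def Perm_def[symmetric] A_def by (auto simp: sum.inter_filter[OF fP] intro!: sum.cong)
    also have "\<dots> = (\<Sum>l\<in>{..<N}. \<beta> (l + 1) * card {\<tau>\<in>A. \<tau> 0 = l})"
      by (rule sum_by_value[OF fA]) (use P0 in \<open>auto simp: A_def\<close>)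
    also have "\<dots> = (\<Sum>l\<in>{..<N}. \<beta> (l + 1) * (if x l = 0 then real (wgt d {..<N} x) else 0))"
    proof (rule sum.cong[OF refl])
      fix l assume l: "l \<in> {..<N}"
      have eqA: "{\<tau>\<in>A. \<tau> 0 = l} = {\<tau>. \<tau> permutes {..<N} \<and> x \<circ> \<tau> = x \<circ> \<sigma> \<and> \<tau> 0 = l}"
        by (auto simp: A_def Perm_def)
      show "\<beta> (l + 1) * card {\<tau>\<in>A. \<tau> 0 = l} = \<beta> (l + 1) * (if x l = 0 then real (wgt d {..<N} x) else 0)"
      proof (cases "x l = 0")
        case True
        have "card {\<tau>\<in>A. \<tau> 0 = l} = card {\<rho>. \<rho> permutes ({..<N} - {\<sigma> 0}) \<and> (\<forall>j\<in>{..<N} - {\<sigma> 0}. x (\<rho> j) = x j)}"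
          unfolding eqA by (rule fiber_card) (use s l N True in \<open>auto simp: Perm_def\<close>)
        also have "\<dots> = wgt d {..<N} x" by (rule Kk[OF xr P0[OF s(1)] s(2)])
        finally show ?thesis using True by simp
      next
        case False
        have "{\<tau>\<in>A. \<tau> 0 = l} = {}"
        proof (rule ccontr)
          assume "{\<tau>\<in>A. \<tau> 0 = l} \<noteq> {}"
          then obtain \<tau> where "\<tau> \<in> A" "\<tau> 0 = l" by auto
          then have "x l = x (\<sigma> 0)" unfolding A_def by (metis (mono_tags, lifting) comp_apply mem_Collect_eq)
          then show False using False s by simp
        qed
        then have "card {\<tau>\<in>A. \<tau> 0 = l} = 0" by (simp only: card.empty)
        then show ?thesis using False by simp
      qed
    qed
    also have "\<dots> = real (wgt d {..<N} x) * (\<Sum>l<N. if x l = 0 then \<beta> (l + 1) else 0)"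
      unfolding sum_distrib_left by (rule sum.cong) auto
    also have "\<dots> = real (wgt d {..<N} x) * B0 N \<beta> x"
      by (simp only: B0_alt)
    finally show ?thesis .
  qed
  have "(\<Sum>k\<in>M0. (Pv N \<beta> x k)^2) = (\<Sum>k\<in>M0. Pv N \<beta> x k * (\<Sum>\<sigma>\<in>Perm. \<beta> (\<sigma> 0 + 1) * (if k = x \<circ> \<sigma> then 1 else 0)))"
    by (simp add: power2_eq_square Pv_def Perm_def)
  also have "\<dots> = (\<Sum>\<sigma>\<in>Perm. \<beta> (\<sigma> 0 + 1) * (\<Sum>k\<in>M0. if k = x \<circ> \<sigma> then Pv N \<beta> x k else 0))"
    by (simp add: sum_distrib_left sum_distrib_right sum.swap[of _ M0] algebra_simps if_distrib cong: if_cong)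
  also have "\<dots> = (\<Sum>\<sigma>\<in>Perm. \<beta> (\<sigma> 0 + 1) * (if x (\<sigma> 0) = 0 then Pv N \<beta> x (x \<circ> \<sigma>) else 0))"
  proof (rule sum.cong[OF refl])
    fix \<sigma> assume s: "\<sigma> \<in> Perm"
    have "x \<circ> \<sigma> \<in> midx d N" using comp_perm_midx[OF x] s by (simp add: Perm_def)
    then have "(\<Sum>k\<in>M0. if k = x \<circ> \<sigma> then Pv N \<beta> x k else 0) = (if x (\<sigma> 0) = 0 then Pv N \<beta> x (x \<circ> \<sigma>) else 0)"
      using fM by (simp add: sum.delta' M0_def)
    then show "\<beta> (\<sigma> 0 + 1) * (\<Sum>k\<in>M0. if k = x \<circ> \<sigma> then Pv N \<beta> x k else 0)
        = \<beta> (\<sigma> 0 + 1) * (if x (\<sigma> 0) = 0 then Pv N \<beta> x (x \<circ> \<sigma>) else 0)" by simp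
  qed
  also have "\<dots> = (\<Sum>\<sigma>\<in>Perm. (if x (\<sigma> 0) = 0 then \<beta> (\<sigma> 0 + 1) else 0)) * (real (wgt d {..<N} x) * B0 N \<beta> x)"
    unfolding sum_distrib_right by (rule sum.cong[OF refl]) (simp add: Pvs)
  also have "(\<Sum>\<sigma>\<in>Perm. (if x (\<sigma> 0) = 0 then \<beta> (\<sigma> 0 + 1) else 0))
      = (\<Sum>l\<in>{..<N}. (if x l = 0 then \<beta> (l + 1) else 0) * card {\<sigma>\<in>Perm. \<sigma> 0 = l})"
    by (rule sum_by_value[OF fP, where g="\<lambda>\<sigma>. \<sigma> 0" and f="\<lambda>l. if x l = 0 then \<beta> (l + 1) else 0"])
       (use P0 in auto)
  also have "\<dots> = (\<Sum>l\<in>{..<N}. (if x l = 0 then \<beta> (l + 1) else 0) * fact (N - 1))"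
    by (rule sum.cong[OF refl]) (simp add: Perm_def perms_fiber)
  also have "\<dots> = fact (N - 1) * (\<Sum>l<N. if x l = 0 then \<beta> (l + 1) else 0)"
    unfolding sum_distrib_left by (rule sum.cong) auto
  also have "\<dots> = fact (N - 1) * B0 N \<beta> x"
    by (simp only: B0_alt)
  finally show ?thesis by (simp add: M0_def power2_eq_square algebra_simps)
qed



definition e0 :: "nat \<Rightarrow> complex" where "e0 a = (if a = 0 then 1 else 0)"

lemma P_beta_real: "P_beta N \<beta> j i = of_real (Pv N \<beta> j i / fact N)"
proof -
  have "P_beta N \<beta> j i = (1 / of_nat (fact N)) *
     (\<Sum>\<sigma>\<in>{\<sigma>. \<sigma> permutes {..<N}}. of_real (\<beta> (\<sigma> 0 + 1) * (if i = j \<circ> \<sigma> then 1 else 0)))"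
    unfolding P_beta_def perm_op_def by (simp add: if_distrib cong: if_cong)
  also have "\<dots> = of_real (Pv N \<beta> j i / fact N)"
    unfolding Pv_def of_real_sum[symmetric] by (simp add: divide_inverse mult.commute)
  finally show ?thesis .
qed

lemma midx_eq:
  assumes "k \<in> midx d N" "k' \<in> midx d N" "k' 0 = k 0" "\<forall>m\<in>{1..<N}. k' m = k m"
  shows "k' = k"
proof
  fix m show "k' m = k m"
  proof (cases "m < N")
    case True then show ?thesis using assms(3,4) by (cases "m = 0") auto
  next
    case False then show ?thesis using assms(1,2) by (auto simp: midx_def PiE_iff extensional_def)
  qed
qed

lemma finite_midx: "finite (midx d N)" by (simp add: midx_def finite_PiE)

lemma inner_sum:
  assumes k: "k \<in> midx d N"
  shows "(\<Sum>k'\<in>midx d N. P_beta N \<beta> x k' * ext_first N (pure_state e0) k' k)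
       = (if k 0 = 0 then P_beta N \<beta> x k else 0)"
proof -
  have "(\<Sum>k'\<in>midx d N. P_beta N \<beta> x k' * ext_first N (pure_state e0) k' k)
      = (\<Sum>k'\<in>midx d N. if k' = k then (if k 0 = 0 then P_beta N \<beta> x k else 0) else 0)"
  proof (rule sum.cong[OF refl])
    fix k' assume k': "k' \<in> midx d N"
    show "P_beta N \<beta> x k' * ext_first N (pure_state e0) k' k
        = (if k' = k then (if k 0 = 0 then P_beta N \<beta> x k else 0) else 0)"
      using midx_eq[OF k k'] by (auto simp: ext_first_def pure_state_def e0_def)
  qed
  also have "\<dots> = (if k 0 = 0 then P_beta N \<beta> x k else 0)"
    using k finite_midx[of d N] by (cases "k 0 = 0") (simp_all add: sum.delta)
  finally show ?thesis .
qed

lemma diag_entry: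
  assumes x: "x \<in> midx d N"
  shows "op_mult d N (op_mult d N (P_beta N \<beta>) (ext_first N (pure_state e0))) (op_transpose (P_beta N \<beta>)) x x
       = of_real ((\<Sum>k\<in>{k\<in>midx d N. k 0 = 0}. (Pv N \<beta> x k)^2) / (fact N)^2)"
proof -
  have "op_mult d N (op_mult d N (P_beta N \<beta>) (ext_first N (pure_state e0))) (op_transpose (P_beta N \<beta>)) x x
      = (\<Sum>k\<in>midx d N. (if k 0 = 0 then P_beta N \<beta> x k else 0) * P_beta N \<beta> x k)"
    unfolding op_mult_def op_transpose_def by (rule sum.cong[OF refl]) (simp add: inner_sum op_mult_def)
  also have "\<dots> = (\<Sum>k\<in>midx d N. if k 0 = 0 then of_real ((Pv N \<beta> x k)^2 / (fact N)^2) else 0)"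
    by (rule sum.cong[OF refl]) (simp add: P_beta_real power2_eq_square)
  also have "\<dots> = (\<Sum>k\<in>{k\<in>midx d N. k 0 = 0}. of_real ((Pv N \<beta> x k)^2 / (fact N)^2))"
    by (rule sum.inter_filter[symmetric]) (rule finite_midx)
  also have "\<dots> = of_real ((\<Sum>k\<in>{k\<in>midx d N. k 0 = 0}. (Pv N \<beta> x k)^2) / (fact N)^2)"
    by (simp add: of_real_sum[symmetric] sum_divide_distrib)
  finally show ?thesis .
qed

lemma marginal_entry:
  assumes i: "1 \<le> i" "i \<le> N"
  shows "marginal d N i (T_beta d N \<beta> (pure_state e0)) 0 0
       = of_real (real d * real N * real (N + d - 1) / real ((N + d - 1) choose N) *
          (\<Sum>x\<in>{x\<in>midx d N. x (i - 1) = 0}. (\<Sum>k\<in>{k\<in>midx d N. k 0 = 0}. (Pv N \<beta> x k)^2) / (fact N)^2))"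
proof -
  define c where "c = real d * real N * real (N + d - 1) / real ((N + d - 1) choose N)"
  have "marginal d N i (T_beta d N \<beta> (pure_state e0)) 0 0
      = (\<Sum>x\<in>midx d N. if x (i - 1) = 0 then T_beta d N \<beta> (pure_state e0) x x else 0)"
    unfolding marginal_def by (rule sum.cong[OF refl]) (simp add: fun_upd_idem)
  also have "\<dots> = (\<Sum>x\<in>midx d N. if x (i - 1) = 0 then
       of_real (c * ((\<Sum>k\<in>{k\<in>midx d N. k 0 = 0}. (Pv N \<beta> x k)^2) / (fact N)^2)) else 0)"
    by (rule sum.cong[OF refl]) (simp add: T_beta_def diag_entry c_def)
  also have "\<dots> = (\<Sum>x\<in>{x\<in>midx d N. x (i - 1) = 0}.
       of_real (c * ((\<Sum>k\<in>{k\<in>midx d N. k 0 = 0}. (Pv N \<beta> x k)^2) / (fact N)^2)))"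
    by (rule sum.inter_filter[symmetric]) (rule finite_midx)
  also have "\<dots> = of_real (c * (\<Sum>x\<in>{x\<in>midx d N. x (i - 1) = 0}. (\<Sum>k\<in>{k\<in>midx d N. k 0 = 0}. (Pv N \<beta> x k)^2) / (fact N)^2))"
    by (simp add: of_real_sum[symmetric] sum_distrib_left)
  finally show ?thesis by (simp add: c_def)
qed



definition coef :: "nat \<Rightarrow> nat \<Rightarrow> real" where
  "coef d t = real d * fact (t - 1) / pochhammer (real d) (t - 1)"

lemma choose_poch:
  assumes "d \<ge> 1"
  shows "real ((N + d - 1) choose N) = pochhammer (real d) N / fact N"
proof -
  have "real ((N + d - 1) choose N) = (real (N + d - 1) gchoose N)" by (simp add: binomial_gbinomial)
  also have "\<dots> = pochhammer (real (N + d - 1) - real N + 1) N / fact N" by (rule gbinomial_pochhammer')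
  also have "real (N + d - 1) - real N + 1 = real d" using assms by (simp add: of_nat_diff)
  finally show ?thesis .
qed

lemma coef_eq:
  assumes d: "d \<ge> 1" and t: "1 \<le> t" "t \<le> N"
  shows "real d * real N * real (N + d - 1) / real ((N + d - 1) choose N) * (fact (N - 1) / (fact N)^2)
          * (fact (t - 1) * pochhammer (real (d + t - 1)) (N - t)) = coef d t"
proof -
  have N: "N = Suc (N - 1)" using t by simp
  have pN: "pochhammer (real d) N = pochhammer (real d) (N - 1) * (real d + real (N - 1))"
    by (subst N) (simp add: pochhammer_Suc)
  have fN: "(fact N :: real) = real N * fact (N - 1)"
    using fact_reduce[of N, where 'a=real] t by simp
  have split: "pochhammer (real d) (N - 1) = pochhammer (real d) (t - 1) * pochhammer (real d + real (t - 1)) (N - t)"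
    using pochhammer_product'[of "real d" "t - 1" "N - t"] t by simp
  have e1: "real (d + t - 1) = real d + real (t - 1)" using t by simp
  have e2: "real (N + d - 1) = real d + real (N - 1)" using t d by simp
  have pos1: "pochhammer (real d) (t - 1) > 0" using d by (intro pochhammer_pos) simp
  have pos2: "pochhammer (real d + real (t - 1)) (N - t) > 0" using d by (intro pochhammer_pos) simp
  have pos3: "real d + real (N - 1) > 0" using d by simp
  have posf: "(fact (N - 1) :: real) > 0" by simp
  have posN: "real N > 0" using t by simp
  have alg: "\<And>A Bp F Ft E n dd. A > 0 \<Longrightarrow> Bp > 0 \<Longrightarrow> E > 0 \<Longrightarrow> F > 0 \<Longrightarrow> n > 0 \<Longrightarrow>
     dd * n * E / (A * Bp * E / (n * F)) * (F / (n * F)^2) * (Ft * Bp) = dd * Ft / (A::real)"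
    by (simp add: field_simps power2_eq_square)
  show ?thesis
    unfolding choose_poch[OF d] pN split e1 e2 coef_def fN
    by (rule alg[OF pos1 pos2 pos3 posf posN])
qed



lemma psi_closed:
  assumes T: "T \<subseteq> {..<N}" "T \<noteq> {}" and d: "d \<ge> 1"
  shows "(\<Sum>x\<in>{x\<in>midx d N. \<forall>m\<in>T. x m = 0}. wgt d {..<N} x)
       = fact (card T - 1) * pochhammer (d + card T - 1) (N - card T)"
proof -
  have fT: "finite T" using T finite_subset by blast
  have eq: "T \<union> ({..<N} - T) = {..<N}" using T by auto
  have cU: "card ({..<N} - T) = N - card T" using T fT by (simp add: card_Diff_subset)
  show ?thesis
    using psi_sum[OF fT T(2) _ _ d, of "{..<N} - T"] unfolding eq cU midx_def by auto
qed

lemma m_formula: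
  assumes d: "d \<ge> 2" and N: "0 < N" and j: "j < N"
  shows "real d * real N * real (N + d - 1) / real ((N + d - 1) choose N) *
          (\<Sum>x\<in>{x\<in>midx d N. x j = 0}. (\<Sum>k\<in>{k\<in>midx d N. k 0 = 0}. (Pv N \<beta> x k)^2) / (fact N)^2)
       = (\<Sum>l<N. \<Sum>l'<N. \<beta> (l + 1) * \<beta> (l' + 1) * coef d (card {j, l, l'}))"
proof -
  define c where "c = real d * real N * real (N + d - 1) / real ((N + d - 1) choose N)"
  define X where "X = {x\<in>midx d N. x j = 0}"
  have fX: "finite X" unfolding X_def using finite_midx by simp
  define ind where "ind x l = (if x l = (0::nat) then \<beta> (l + 1) else 0)" for x :: "nat \<Rightarrow> nat" and l
  have "(\<Sum>x\<in>X. (\<Sum>k\<in>{k\<in>midx d N. k 0 = 0}. (Pv N \<beta> x k)^2) / (fact N)^2)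
      = (\<Sum>x\<in>X. (fact (N - 1) / (fact N)^2) * (real (wgt d {..<N} x) * (B0 N \<beta> x)^2))"
    by (rule sum.cong[OF refl]) (simp add: stepB[OF _ N] X_def)
  also have "\<dots> = (fact (N - 1) / (fact N)^2) * (\<Sum>x\<in>X. real (wgt d {..<N} x) * (B0 N \<beta> x)^2)"
    by (simp add: sum_distrib_left)
  also have "(\<Sum>x\<in>X. real (wgt d {..<N} x) * (B0 N \<beta> x)^2)
      = (\<Sum>x\<in>X. \<Sum>l<N. \<Sum>l'<N. real (wgt d {..<N} x) * (ind x l * ind x l'))"
  proof (rule sum.cong[OF refl])
    fix x
    have "B0 N \<beta> x = (\<Sum>l<N. ind x l)" by (simp add: B0_alt ind_def)
    show "real (wgt d {..<N} x) * (B0 N \<beta> x)^2 = (\<Sum>l<N. \<Sum>l'<N. real (wgt d {..<N} x) * (ind x l * ind x l'))"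
    proof -
      have "(\<Sum>l<N. ind x l) * (\<Sum>l'<N. ind x l') = (\<Sum>l<N. \<Sum>l'<N. ind x l * ind x l')"
        by (rule sum_product)
      then show ?thesis using \<open>B0 N \<beta> x = (\<Sum>l<N. ind x l)\<close>
        by (simp add: power2_eq_square sum_distrib_left)
    qed
  qed
  also have "\<dots> = (\<Sum>l<N. \<Sum>l'<N. \<Sum>x\<in>X. real (wgt d {..<N} x) * (ind x l * ind x l'))"
    by (simp add: sum.swap[of _ X])
  also have "\<dots> = (\<Sum>l<N. \<Sum>l'<N. \<beta> (l + 1) * \<beta> (l' + 1) *
       real (fact (card {j, l, l'} - 1) * pochhammer (d + card {j, l, l'} - 1) (N - card {j, l, l'})))"
  proof (intro sum.cong[OF refl])
    fix l l' assume l: "l \<in> {..<N}" and l': "l' \<in> {..<N}"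
    have "(\<Sum>x\<in>X. real (wgt d {..<N} x) * (ind x l * ind x l'))
        = (\<Sum>x\<in>X. if x l = 0 \<and> x l' = 0 then \<beta> (l + 1) * \<beta> (l' + 1) * real (wgt d {..<N} x) else 0)"
      by (rule sum.cong[OF refl]) (simp add: ind_def)
    also have "\<dots> = (\<Sum>x\<in>{x\<in>X. x l = 0 \<and> x l' = 0}. \<beta> (l + 1) * \<beta> (l' + 1) * real (wgt d {..<N} x))"
      by (rule sum.inter_filter[symmetric, OF fX])
    also have "{x\<in>X. x l = 0 \<and> x l' = 0} = {x\<in>midx d N. \<forall>m\<in>{j, l, l'}. x m = 0}"
      by (auto simp: X_def)
    also have "(\<Sum>x\<in>{x\<in>midx d N. \<forall>m\<in>{j, l, l'}. x m = 0}. \<beta> (l + 1) * \<beta> (l' + 1) * real (wgt d {..<N} x))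
        = \<beta> (l + 1) * \<beta> (l' + 1) * real (\<Sum>x\<in>{x\<in>midx d N. \<forall>m\<in>{j, l, l'}. x m = 0}. wgt d {..<N} x)"
      by (simp add: sum_distrib_left)
    also have "(\<Sum>x\<in>{x\<in>midx d N. \<forall>m\<in>{j, l, l'}. x m = 0}. wgt d {..<N} x)
        = fact (card {j, l, l'} - 1) * pochhammer (d + card {j, l, l'} - 1) (N - card {j, l, l'})"
      by (rule psi_closed) (use l l' j d in auto)
    finally show "(\<Sum>x\<in>X. real (wgt d {..<N} x) * (ind x l * ind x l')) = \<beta> (l + 1) * \<beta> (l' + 1) *
       real (fact (card {j, l, l'} - 1) * pochhammer (d + card {j, l, l'} - 1) (N - card {j, l, l'}))" .
  qed
  finally have A: "c * (\<Sum>x\<in>X. (\<Sum>k\<in>{k\<in>midx d N. k 0 = 0}. (Pv N \<beta> x k)^2) / (fact N)^2)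
     = (\<Sum>l<N. \<Sum>l'<N. \<beta> (l + 1) * \<beta> (l' + 1) *
        (c * (fact (N - 1) / (fact N)^2) * (fact (card {j, l, l'} - 1) * pochhammer (real (d + card {j, l, l'} - 1)) (N - card {j, l, l'}))))"
    by (simp add: sum_distrib_left pochhammer_of_nat[symmetric] mult_ac)
  also have "\<dots> = (\<Sum>l<N. \<Sum>l'<N. \<beta> (l + 1) * \<beta> (l' + 1) * coef d (card {j, l, l'}))"
  proof (intro sum.cong[OF refl])
    fix l l' assume l: "l \<in> {..<N}" and l': "l' \<in> {..<N}"
    have t1: "1 \<le> card {j, l, l'}" by (simp add: Suc_leI card_gt_0_iff)
    have t2: "card {j, l, l'} \<le> N"
      using card_mono[of "{..<N}" "{j, l, l'}"] l l' j by auto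
    show "\<beta> (l + 1) * \<beta> (l' + 1) * (c * (fact (N - 1) / (fact N)^2) * (fact (card {j, l, l'} - 1) *
        pochhammer (real (d + card {j, l, l'} - 1)) (N - card {j, l, l'})))
        = \<beta> (l + 1) * \<beta> (l' + 1) * coef d (card {j, l, l'})"
      using coef_eq[OF _ t1 t2, of d] d by (simp add: c_def)
  qed
  finally show ?thesis by (simp add: c_def X_def)
qed



lemma coef_card:
  assumes d: "d \<ge> 2"
  shows "coef d (card {j, l, l'}) = (2
     + (real d - 1) * ((if l = l' then 1 else 0) + (if l = j then 1 else 0) + (if l' = j then 1 else 0))
     + (real d - 1)^2 * (if l = j \<and> l' = j then 1 else 0)) / (real d + 1)"
proof -
  have dp: "real d + 1 \<noteq> 0" by simp
  have c1: "coef d (Suc 0) = real d" by (simp add: coef_def)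
  have c2: "coef d (Suc (Suc 0)) = 1" using d by (simp add: coef_def)
  have c2': "coef d 2 = 1" using c2 by (simp add: numeral_2_eq_2)
  have c3: "coef d 3 = 2 / (real d + 1)"
  proof -
    have "pochhammer (real d) 2 = real d * (real d + 1)" by (simp add: numeral_2_eq_2 pochhammer_Suc)
    moreover have "(fact 2 :: real) = 2" by (simp add: numeral_2_eq_2)
    ultimately have "coef d 3 = real d * 2 / (real d * (real d + 1))" by (simp add: coef_def)
    also have "\<dots> = 2 / (real d + 1)" using d by simp
    finally show ?thesis .
  qed
  have n1: "2 + (real d - 1) * (1 + 1 + 1) + (real d - 1)^2 * 1 = real d * (real d + 1)"
    by (simp add: power2_eq_square algebra_simps)
  have n2: "2 + (real d - 1) * 1 = 1 * (real d + 1)" by simp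
  show ?thesis
  proof (cases "l = j")
    case True
    show ?thesis
    proof (cases "l' = j")
      case True
      with \<open>l = j\<close> have "card {j, l, l'} = Suc 0" by simp
      then show ?thesis using True \<open>l = j\<close> dp n1 by (simp add: c1)
    next
      case False
      then have "card {j, l, l'} = 2" using \<open>l = j\<close> by simp
      then show ?thesis using False \<open>l = j\<close> dp by (simp add: c2 c2' add.commute)
    qed
  next
    case False
    show ?thesis
    proof (cases "l' = j")
      case True
      then have "card {j, l, l'} = 2" using \<open>l \<noteq> j\<close> by (simp add: insert_commute)
      then show ?thesis using True \<open>l \<noteq> j\<close> dp by (simp add: c2 c2' add.commute)
    next
      case False
      show ?thesis
      proof (cases "l = l'")
        case True
        then have "card {j, l, l'} = 2" using \<open>l \<noteq> j\<close> by auto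
        then show ?thesis using True False \<open>l \<noteq> j\<close> dp by (simp add: c2 c2' add.commute)
      next
        case False
        then have "card {j, l, l'} = 3" using \<open>l \<noteq> j\<close> \<open>l' \<noteq> j\<close> by auto
        then show ?thesis using False \<open>l \<noteq> j\<close> \<open>l' \<noteq> j\<close> using c3 by (simp add: numeral_3_eq_3)
      qed
    qed
  qed
qed

lemma double_sum:
  fixes b :: "nat \<Rightarrow> real"
  assumes d: "d \<ge> 2" and j: "j < N"
  shows "(\<Sum>l<N. \<Sum>l'<N. b l * b l' * coef d (card {j, l, l'}))
       = (2 * (\<Sum>l<N. b l)^2 + (real d - 1) * ((\<Sum>l<N. (b l)^2) + 2 * b j * (\<Sum>l<N. b l))
          + (real d - 1)^2 * (b j)^2) / (real d + 1)"
proof -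
  define s where "s = (\<Sum>l<N. b l)"
  define B where "B = (\<Sum>l<N. (b l)^2)"
  define \<alpha> where "\<alpha> = 2 / (real d + 1)"
  define \<gamma> where "\<gamma> = (real d - 1) / (real d + 1)"
  define \<delta> where "\<delta> = (real d - 1)^2 / (real d + 1)"
  have S1: "(\<Sum>l<N. \<Sum>l'<N. b l * b l') = s^2"
    by (simp add: s_def power2_eq_square sum_product)
  have S1': "(\<Sum>l<N. b l * sum b {..<N}) = s^2"
    by (simp add: s_def power2_eq_square sum_distrib_right)
  have S2: "(\<Sum>l<N. \<Sum>l'<N. b l * b l' * (if l = l' then 1 else 0)) = B"
    by (simp add: B_def power2_eq_square if_distrib cong: if_cong)
  have S3: "(\<Sum>l<N. \<Sum>l'<N. b l * b l' * (if l = j then 1 else 0)) = b j * s"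
  proof -
    have "(\<Sum>l<N. \<Sum>l'<N. b l * b l' * (if l = j then 1 else 0)) = (\<Sum>l<N. if l = j then b l * s else 0)"
      by (intro sum.cong refl) (simp add: s_def sum_distrib_left)
    then show ?thesis using j by simp
  qed
  have S4: "(\<Sum>l<N. \<Sum>l'<N. b l * b l' * (if l' = j then 1 else 0)) = b j * s"
  proof -
    have "(\<Sum>l<N. \<Sum>l'<N. b l * b l' * (if l' = j then 1 else 0)) = (\<Sum>l<N. b l * b j)"
      using j by (intro sum.cong refl) (simp add: if_distrib cong: if_cong)
    also have "\<dots> = b j * s" by (simp add: s_def sum_distrib_left mult.commute)
    finally show ?thesis .
  qed
  have S5: "(\<Sum>l<N. \<Sum>l'<N. b l * b l' * (if l = j \<and> l' = j then 1 else 0)) = (b j)^2"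
  proof -
    have "(\<Sum>l<N. \<Sum>l'<N. b l * b l' * (if l = j \<and> l' = j then 1 else 0)) = (\<Sum>l<N. if l = j then b j * b j else 0)"
      using j by (intro sum.cong refl) (auto simp: if_distrib cong: if_cong)
    then show ?thesis using j by (simp add: power2_eq_square)
  qed
  have "(\<Sum>l<N. \<Sum>l'<N. b l * b l' * coef d (card {j, l, l'}))
      = (\<Sum>l<N. \<Sum>l'<N. (2 * (b l * b l') + (real d - 1) * (b l * b l' * (if l = l' then 1 else 0))
          + (real d - 1) * (b l * b l' * (if l = j then 1 else 0)) + (real d - 1) * (b l * b l' * (if l' = j then 1 else 0))
          + (real d - 1)^2 * (b l * b l' * (if l = j \<and> l' = j then 1 else 0))) / (real d + 1))"
  proof (intro sum.cong refl)
    fix l l'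
    show "b l * b l' * coef d (card {j, l, l'}) = (2 * (b l * b l') + (real d - 1) * (b l * b l' * (if l = l' then 1 else 0))
          + (real d - 1) * (b l * b l' * (if l = j then 1 else 0)) + (real d - 1) * (b l * b l' * (if l' = j then 1 else 0))
          + (real d - 1)^2 * (b l * b l' * (if l = j \<and> l' = j then 1 else 0))) / (real d + 1)"
      unfolding coef_card[OF d] times_divide_eq_right
      by (rule arg_cong[where f="\<lambda>t. t / (real d + 1)"]) (simp add: algebra_simps)
  qed
  also have "\<dots> = (\<Sum>l<N. \<Sum>l'<N. (2 * (b l * b l') + (real d - 1) * (b l * b l' * (if l = l' then 1 else 0))
          + (real d - 1) * (b l * b l' * (if l = j then 1 else 0)) + (real d - 1) * (b l * b l' * (if l' = j then 1 else 0))
          + (real d - 1)^2 * (b l * b l' * (if l = j \<and> l' = j then 1 else 0)))) / (real d + 1)"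
    by (simp only: sum_divide_distrib)
  also have "\<dots> = (2 * s^2 + (real d - 1) * B + (real d - 1) * (b j * s) + (real d - 1) * (b j * s) + (real d - 1)^2 * (b j)^2) / (real d + 1)"
    using S1 by (simp only: sum.distrib sum_distrib_left[symmetric] S1' S2 S3 S4 S5)
  also have "\<dots> = (2 * s^2 + (real d - 1) * (B + 2 * b j * s) + (real d - 1)^2 * (b j)^2) / (real d + 1)"
    by (simp add: algebra_simps)
  finally show ?thesis by (simp add: s_def B_def)
qed



lemma reidx: "(\<Sum>i=1..N. f i) = (\<Sum>l<N. f (l + 1 :: nat) :: real)"
  using sum.atLeast1_atMost_eq[of f N] by simp

lemma per_i:
  fixes d N :: nat and \<beta> p :: "nat \<Rightarrow> real"
  assumes d: "d \<ge> 2" and N: "N \<ge> 1" and i: "i \<in> {1..N}"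
    and cons: "(real d - 1) * (\<Sum>l<N. (\<beta> (l + 1))^2) + (\<Sum>l<N. \<beta> (l + 1))^2 = 1"
    and hyp: "\<forall>v :: nat \<Rightarrow> complex. (\<Sum>a<d. (cmod (v a))^2) = 1 \<longrightarrow>
           (\<forall>a<d. \<forall>b<d. marginal d N i (T_beta d N \<beta> (pure_state v)) a b =
              of_real (p i) * pure_state v a b
              + of_real (1 - p i) * (if a = b then 1 / of_nat d else 0))"
  shows "((real d)^2 - 1) * p i + 1 = real d * ((real d - 1) * \<beta> i + (\<Sum>l<N. \<beta> (l + 1)))^2"
proof -
  define s where "s = (\<Sum>l<N. \<beta> (l + 1))"
  define B where "B = (\<Sum>l<N. (\<beta> (l + 1))^2)"
  define j where "j = i - 1"
  have j: "j < N" and ij: "j + 1 = i" using i by (auto simp: j_def)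
  have d0: "0 < d" using d by simp
  have norm: "(\<Sum>a<d. (cmod (e0 a))^2) = 1"
  proof -
    have "(\<Sum>a<d. (cmod (e0 a))^2) = (\<Sum>a<d. if a = 0 then 1 else 0)"
      by (rule sum.cong) (auto simp: e0_def)
    also have "\<dots> = 1" using d0 by simp
    finally show ?thesis .
  qed
  have h: "marginal d N i (T_beta d N \<beta> (pure_state e0)) 0 0 = of_real (p i) * 1 + of_real (1 - p i) * (1 / of_nat d)"
    using hyp norm d0 by (simp add: pure_state_def e0_def)
  define M where "M = (\<Sum>l<N. \<Sum>l'<N. \<beta> (l + 1) * \<beta> (l' + 1) * coef d (card {j, l, l'}))"
  have "marginal d N i (T_beta d N \<beta> (pure_state e0)) 0 0
     = of_real (real d * real N * real (N + d - 1) / real ((N + d - 1) choose N) *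
          (\<Sum>x\<in>{x\<in>midx d N. x (i - 1) = 0}. (\<Sum>k\<in>{k\<in>midx d N. k 0 = 0}. (Pv N \<beta> x k)^2) / (fact N)^2))"
    by (rule marginal_entry) (use i in auto)
  also have "real d * real N * real (N + d - 1) / real ((N + d - 1) choose N) *
          (\<Sum>x\<in>{x\<in>midx d N. x (i - 1) = 0}. (\<Sum>k\<in>{k\<in>midx d N. k 0 = 0}. (Pv N \<beta> x k)^2) / (fact N)^2) = M"
    unfolding M_def j_def[symmetric] by (rule m_formula[OF d _ j]) (use N in simp)
  finally have "marginal d N i (T_beta d N \<beta> (pure_state e0)) 0 0 = of_real M" .
  with h have "complex_of_real M = complex_of_real (p i + (1 - p i) / real d)" by simp
  then have hM: "M = p i + (1 - p i) / real d" using of_real_eq_iff by blast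
  have Mval: "M = (2 * s^2 + (real d - 1) * (B + 2 * \<beta> i * s) + (real d - 1)^2 * (\<beta> i)^2) / (real d + 1)"
    unfolding M_def double_sum[OF d j, of "\<lambda>l. \<beta> (l + 1)"] s_def B_def ij by simp
  have dM: "real d * M = real d * p i + (1 - p i)" using hM d0 by (simp add: field_simps)
  have dp1: "(real d + 1) * M = 1 + ((real d - 1) * \<beta> i + s)^2"
    using Mval cons unfolding s_def[symmetric] B_def[symmetric]
    by (simp add: field_simps power2_eq_square)
  have dM2: "real d * (real d * M) = real d * (real d * p i + (1 - p i))" using dM by simp
  have "((real d)^2 - 1) * p i + 1 = (real d + 1) * (real d * M - 1) + 1"
  proof -
    have "(real d + 1) * (real d * M - 1) + 1 = real d * (real d * M) + real d * M - real d"
      by (simp add: algebra_simps)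
    also have "\<dots> = ((real d)^2 - 1) * p i + 1"
      unfolding dM2 dM by (simp add: power2_eq_square algebra_simps)
    finally show ?thesis by simp
  qed
  also have "\<dots> = real d * ((real d + 1) * M) - real d" by (simp add: algebra_simps)
  also have "\<dots> = real d * ((real d - 1) * \<beta> i + s)^2" using dp1 by (simp add: algebra_simps)
  finally show ?thesis by (simp add: s_def)
qed

theorem mainTheorem16:
  fixes d N :: nat and \<beta> p :: "nat \<Rightarrow> real"
  assumes "d \<ge> 2" and "N \<ge> 1"
    and "\<forall>i\<in>{1..N}. \<beta> i > 0"
    and "(real d - 1) * (\<Sum>i=1..N. (\<beta> i)^2) + (\<Sum>i=1..N. \<beta> i)^2 = 1"
    and "\<forall>i\<in>{1..N}. \<forall>v :: nat \<Rightarrow> complex. (\<Sum>a<d. (cmod (v a))^2) = 1 \<longrightarrow>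
           (\<forall>a<d. \<forall>b<d. marginal d N i (T_beta d N \<beta> (pure_state v)) a b =
              of_real (p i) * pure_state v a b
              + of_real (1 - p i) * (if a = b then 1 / of_nat d else 0))"
  shows "real N + ((real d)^2 - 1) * (\<Sum>i=1..N. p i)
         = real d * (real d - 1)
           + (\<Sum>i=1..N. sqrt (((real d)^2 - 1) * p i + 1))^2 / real (N + d - 1)"
proof -
  define s where "s = (\<Sum>i=1..N. \<beta> i)"
  define B where "B = (\<Sum>i=1..N. (\<beta> i)^2)"
  define q where "q i = (real d - 1) * \<beta> i + s" for i
  have d: "d \<ge> 2" and N: "N \<ge> 1" using assms by auto
  have s': "(\<Sum>l<N. \<beta> (l + 1)) = s" unfolding s_def reidx by simp
  have B': "(\<Sum>l<N. (\<beta> (l + 1))^2) = B" unfolding B_def reidx by simp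
  have cons: "(real d - 1) * B + s^2 = 1" using assms(4) by (simp add: s_def B_def)
  have key: "((real d)^2 - 1) * p i + 1 = real d * (q i)^2" if i: "i \<in> {1..N}" for i
    using per_i[where \<beta>=\<beta> and p=p, OF d N i _ bspec[OF assms(5) i]] cons unfolding s' B' q_def by simp
  have spos: "s > 0" unfolding s_def using assms(3) N by (intro sum_pos) auto
  have qpos: "q i > 0" if "i \<in> {1..N}" for i
    using assms(3) that spos d by (simp add: q_def add_pos_pos)
  have sq: "sqrt (((real d)^2 - 1) * p i + 1) = sqrt (real d) * q i" if i: "i \<in> {1..N}" for i
    unfolding key[OF i] real_sqrt_mult using qpos[OF i] by simp
  have sumq: "(\<Sum>i=1..N. q i) = s * real (N + d - 1)"
  proof -
    have "(\<Sum>i=1..N. q i) = (real d - 1) * s + real N * s"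
      by (simp add: q_def sum.distrib sum_distrib_left s_def)
    then show ?thesis using d by (simp add: of_nat_diff algebra_simps)
  qed
  have sumq2: "(\<Sum>i=1..N. (q i)^2) = (real d - 1)^2 * B + 2 * (real d - 1) * s^2 + real N * s^2"
  proof -
    have "(\<Sum>i=1..N. (q i)^2) = (\<Sum>i=1..N. (real d - 1)^2 * (\<beta> i)^2 + 2 * (real d - 1) * s * \<beta> i + s^2)"
      by (rule sum.cong) (simp_all add: q_def power2_eq_square algebra_simps)
    also have "\<dots> = (\<Sum>i=1..N. (real d - 1)^2 * (\<beta> i)^2) + (\<Sum>i=1..N. 2 * (real d - 1) * s * \<beta> i) + (\<Sum>i=1..N. s^2)"
      by (simp only: sum.distrib)
    also have "(\<Sum>i=1..N. (real d - 1)^2 * (\<beta> i)^2) = (real d - 1)^2 * B"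
      unfolding B_def by (rule sum_distrib_left[symmetric])
    also have "(\<Sum>i=1..N. 2 * (real d - 1) * s * \<beta> i) = 2 * (real d - 1) * s * s"
      unfolding s_def by (rule sum_distrib_left[symmetric])
    also have "(\<Sum>i=1..N. s^2) = real N * s^2" by simp
    finally show ?thesis by (simp add: power2_eq_square)
  qed
  have Np: "real (N + d - 1) > 0" using N d by simp
  have "(\<Sum>i=1..N. sqrt (((real d)^2 - 1) * p i + 1)) = sqrt (real d) * (s * real (N + d - 1))"
  proof -
    have "(\<Sum>i=1..N. sqrt (((real d)^2 - 1) * p i + 1)) = (\<Sum>i=1..N. sqrt (real d) * q i)"
      by (rule sum.cong[OF refl]) (rule sq)
    also have "\<dots> = sqrt (real d) * (\<Sum>i=1..N. q i)" by (rule sum_distrib_left[symmetric])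
    finally show ?thesis by (simp only: sumq)
  qed
  then have R: "(\<Sum>i=1..N. sqrt (((real d)^2 - 1) * p i + 1))^2 / real (N + d - 1) = real d * s^2 * real (N + d - 1)"
    using Np by (simp add: power_mult_distrib power2_eq_square)
  have L: "real N + ((real d)^2 - 1) * (\<Sum>i=1..N. p i) = real d * (\<Sum>i=1..N. (q i)^2)"
  proof -
    have "real N + ((real d)^2 - 1) * (\<Sum>i=1..N. p i) = (\<Sum>i=1..N. ((real d)^2 - 1) * p i + 1)"
      by (simp add: sum.distrib sum_distrib_left)
    also have "\<dots> = (\<Sum>i=1..N. real d * (q i)^2)" by (rule sum.cong) (simp_all add: key)
    finally show ?thesis by (simp add: sum_distrib_left)
  qed
  have "real d * (\<Sum>i=1..N. (q i)^2) = real d * (real d - 1) + real d * s^2 * real (N + d - 1)"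
  proof -
    have s2: "s^2 = 1 - (real d - 1) * B" using cons by simp
    have e: "(real d - 1)^2 * B = (real d - 1) * (1 - s^2)" unfolding s2 by (simp add: power2_eq_square algebra_simps)
    have "real (N + d - 1) = real N + real d - 1" using d by (simp add: of_nat_diff)
    then show ?thesis unfolding sumq2 e by (simp add: algebra_simps)
  qed
  then show ?thesis unfolding L R .
qed

end
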